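(* Let $(p,f)$ be an SCF-RT that is rationalizable within the class of all RUM-CFs, and let $(x,y)\in D$. Put $q=p(x,y)/p(y,x)$. If $F(y,x)$ $q$-FSD $F(x,y)$, then every RUM-CF $(u,g,r)$ that rationalizes $(p,f)$ satisfies $u(x)\geq u(y)$ (i.e. $(p,f)$ reveals a preference for $x$ over $y$). If $F(y,x)$ $q$-SFSD $F(x,y)$, then every RUM-CF that rationalizes $(p,f)$ satisfies $u(x)>u(y)$ (a revealed strict preference for $x$ over $y$).
   Context: $X$ is a finite set of options; $C=\{(x,y): x,y\in X,\ x\neq y\}$; $D\subseteq C$ is a fixed non-empty set with $(x,y)\in D\Rightarrow (y,x)\in D$. A stochastic choice function (SCF) $p$ assigns to each $(x,y)\in D$ a number $p(x,y)>0$ with $p(x,y)+p(y,x)=1$ (probability of choosing $x$ from $\{x,y\}$). An SCF with response times (SCF-RT) is a pair $(p,f)$ where $p$ is an SCF and $f$ assigns to each $(x,y)\in D$ a strictly positive probability density $f(x,y)$ on $\mathbb{R}^+$ (response time density conditional on choosing $x$ from $\{x,y\}$), with cdf $F(x,y)$. A random utility model (RUM) is a pair $(u,g)$ with $u:X\to\mathbb{R}$ and $g$ assigning to each $(x,y)\in C$ a density $g(x,y)$ on $\mathbb{R}$ (cdf $G(x,y)$) such that: $\int v\,g(x,y)(v)\,dv=u(x)-u(y)$; $g(x,y)(v)=g(y,x)(-v)$ for all $v$; and the support of $g(x,y)$ is connected. A RUM with a chronometric function (RUM-CF) is a triple $(u,g,r)$ where $(u,g)$ is a RUM and $r:\mathbb{R}^{++}\to\mathbb{R}^+$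 is continuous, strictly decreasing on the set where $r(v)>0$, with $\lim_{v\to0}r(v)=\infty$ and $\lim_{v\to\infty}r(v)=0$; $r^{-1}(t)$ for $t>0$ denotes the inverse of the restriction of $r$ to $\{v: r(v)>0\}$. A RUM-CF $(u,g,r)$ rationalizes an SCF-RT $(p,f)$ if for all $(x,y)\in D$: $G(x,y)(0)=p(y,x)$, and $\frac{1-G(x,y)(r^{-1}(t))}{1-G(x,y)(0)}=F(x,y)(t)$ for all $t>0$. For cdfs $G,H$ on $\mathbb{R}^+$ and a constant $q>0$, $G$ $q$-FSD $H$ means $G(t)\leq q\,H(t)$ for all $t\geq0$; $G$ $q$-SFSD $H$ means additionally the inequality is strict for some $t$. *)

theory Defs
  imports "HOL-Analysis.Analysis"
begin

text \<open>Options are the elements of a finite type 'a. Pairs (x,y) with x \<noteq> y form C.\<close>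

definition domain_ok :: "('a \<times> 'a) set \<Rightarrow> bool" where
  "domain_ok D \<longleftrightarrow> D \<noteq> {} \<and> D \<subseteq> {(x,y). x \<noteq> y} \<and> (\<forall>x y. (x,y) \<in> D \<longrightarrow> (y,x) \<in> D)"

text \<open>Stochastic choice function on D: p x y = probability of choosing x from {x,y}.\<close>
definition SCF :: "('a \<times> 'a) set \<Rightarrow> ('a \<Rightarrow> 'a \<Rightarrow> real) \<Rightarrow> bool" where
  "SCF D p \<longleftrightarrow> (\<forall>(x,y)\<in>D. p x y > 0 \<and> p x y + p y x = 1)"

definition pos_density_Rplus :: "(real \<Rightarrow> real) \<Rightarrow> bool" where
  "pos_density_Rplus h \<longleftrightarrow> (\<forall>t\<ge>0. h t > 0) \<and> (h has_integral 1) {0..}"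

definition cdf_Rplus :: "(real \<Rightarrow> real) \<Rightarrow> real \<Rightarrow> real" where
  "cdf_Rplus h t = integral {0..t} h"

definition SCF_RT :: "('a \<times> 'a) set \<Rightarrow> ('a \<Rightarrow> 'a \<Rightarrow> real) \<Rightarrow> ('a \<Rightarrow> 'a \<Rightarrow> real \<Rightarrow> real) \<Rightarrow> bool" where
  "SCF_RT D p f \<longleftrightarrow> SCF D p \<and> (\<forall>(x,y)\<in>D. pos_density_Rplus (f x y))"

definition density_R :: "(real \<Rightarrow> real) \<Rightarrow> bool" where
  "density_R h \<longleftrightarrow> (\<forall>v. h v \<ge> 0) \<and> (h has_integral 1) UNIV"

definition cdf_R :: "(real \<Rightarrow> real) \<Rightarrow> real \<Rightarrow> real" where
  "cdf_R h z = integral {..z} h"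

definition support :: "(real \<Rightarrow> real) \<Rightarrow> real set" where
  "support h = closure {v. h v > 0}"

definition RUM :: "('a \<Rightarrow> real) \<Rightarrow> ('a \<Rightarrow> 'a \<Rightarrow> real \<Rightarrow> real) \<Rightarrow> bool" where
  "RUM u g \<longleftrightarrow> (\<forall>x y. x \<noteq> y \<longrightarrow>
      density_R (g x y)
    \<and> ((\<lambda>v. v * g x y v) has_integral (u x - u y)) UNIV
    \<and> (\<forall>v. g x y v = g y x (- v))
    \<and> connected (support (g x y)))"

text \<open>Chronometric function r : R++ \<rightarrow> R+ (only its values on (0,\<infinity>) matter).\<close>
definition chronometric :: "(real \<Rightarrow> real) \<Rightarrow> bool" where
  "chronometric r \<longleftrightarrow> (\<forall>v>0. r v \<ge> 0)
    \<and> continuous_on {0<..} r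
    \<and> (\<forall>v w. 0 < v \<and> v < w \<and> r v > 0 \<and> r w > 0 \<longrightarrow> r w < r v)
    \<and> filterlim r at_top (at_right 0)
    \<and> (r \<longlongrightarrow> 0) at_top"

definition r_inv :: "(real \<Rightarrow> real) \<Rightarrow> real \<Rightarrow> real" where
  "r_inv r t = (THE v. v > 0 \<and> r v > 0 \<and> r v = t)"

definition RUM_CF :: "('a \<Rightarrow> real) \<Rightarrow> ('a \<Rightarrow> 'a \<Rightarrow> real \<Rightarrow> real) \<Rightarrow> (real \<Rightarrow> real) \<Rightarrow> bool" where
  "RUM_CF u g r \<longleftrightarrow> RUM u g \<and> chronometric r"

definition rationalizes ::
  "('a \<Rightarrow> real) \<Rightarrow> ('a \<Rightarrow> 'a \<Rightarrow> real \<Rightarrow> real) \<Rightarrow> (real \<Rightarrow> real) \<Rightarrow>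
   ('a \<times> 'a) set \<Rightarrow> ('a \<Rightarrow> 'a \<Rightarrow> real) \<Rightarrow> ('a \<Rightarrow> 'a \<Rightarrow> real \<Rightarrow> real) \<Rightarrow> bool" where
  "rationalizes u g r D p f \<longleftrightarrow> RUM_CF u g r \<and> (\<forall>(x,y)\<in>D.
      cdf_R (g x y) 0 = p y x
    \<and> (\<forall>t>0. (1 - cdf_R (g x y) (r_inv r t)) / (1 - cdf_R (g x y) 0) = cdf_Rplus (f x y) t))"

definition qFSD :: "real \<Rightarrow> (real \<Rightarrow> real) \<Rightarrow> (real \<Rightarrow> real) \<Rightarrow> bool" where
  "qFSD q G H \<longleftrightarrow> (\<forall>t\<ge>0. G t \<le> q * H t)"

definition qSFSD :: "real \<Rightarrow> (real \<Rightarrow> real) \<Rightarrow> (real \<Rightarrow> real) \<Rightarrow> bool" where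
  "qSFSD q G H \<longleftrightarrow> qFSD q G H \<and> (\<exists>t\<ge>0. G t < q * H t)"

end

theory Submission
  imports Defs
begin

lemma bm_leb: "(f::real\<Rightarrow>real) \<in> borel_measurable borel \<Longrightarrow> f \<in> borel_measurable (lebesgue_on UNIV)"
  by (simp add: lebesgue_on_UNIV_eq measurable_completion)

definition okf :: "(real \<Rightarrow> real) \<Rightarrow> bool" where
  "okf \<phi> \<longleftrightarrow> \<phi> \<in> borel_measurable borel \<and> (\<exists>C. \<forall>v. \<bar>\<phi> v\<bar> \<le> C)"

lemma okf_add: "okf \<phi> \<Longrightarrow> okf \<psi> \<Longrightarrow> okf (\<lambda>v. \<phi> v + \<psi> v)"
  unfolding okf_def
proof (elim conjE exE, intro conjI)
  fix C1 C2 assume "\<forall>v. \<bar>\<phi> v\<bar> \<le> C1" "\<forall>v. \<bar>\<psi> v\<bar> \<le> C2"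
  then show "\<exists>C. \<forall>v. \<bar>\<phi> v + \<psi> v\<bar> \<le> C"
    by (intro exI[of _ "C1 + C2"] allI order.trans[OF abs_triangle_ineq] add_mono) auto
qed auto

lemma okf_diff: "okf \<phi> \<Longrightarrow> okf \<psi> \<Longrightarrow> okf (\<lambda>v. \<phi> v - \<psi> v)"
  unfolding okf_def
proof (elim conjE exE, intro conjI)
  fix C1 C2 assume "\<forall>v. \<bar>\<phi> v\<bar> \<le> C1" "\<forall>v. \<bar>\<psi> v\<bar> \<le> C2"
  then show "\<exists>C. \<forall>v. \<bar>\<phi> v - \<psi> v\<bar> \<le> C"
    by (intro exI[of _ "C1 + C2"] allI order.trans[OF abs_triangle_ineq4] add_mono) auto
qed auto

lemma okf_cmult: "okf \<phi> \<Longrightarrow> okf (\<lambda>v. c * \<phi> v)"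
  unfolding okf_def
proof (elim conjE exE, intro conjI)
  fix C1 assume "\<forall>v. \<bar>\<phi> v\<bar> \<le> C1"
  then show "\<exists>C. \<forall>v. \<bar>c * \<phi> v\<bar> \<le> C"
    by (intro exI[of _ "\<bar>c\<bar> * C1"]) (simp add: abs_mult mult_left_mono)
qed auto

definition K :: "real \<Rightarrow> real \<Rightarrow> real \<Rightarrow> real" where
  "K s t v = min (max (v - s) 0) (t - s) - min (max (- v - s) 0) (t - s)"

definition Iv :: "real \<Rightarrow> real \<Rightarrow> real \<Rightarrow> real" where
  "Iv s t v = (if s < v \<and> v \<le> t then 1 else 0) + (if s < - v \<and> - v \<le> t then 1 else 0)"

lemma K_bound: "s \<le> t \<Longrightarrow> \<bar>K s t v\<bar> \<le> 2 * (t - s)"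
  unfolding K_def by (auto simp: min_def max_def)

lemma okf_K: "s \<le> t \<Longrightarrow> okf (K s t)"
  unfolding okf_def
proof (intro conjI exI allI)
  show "K s t \<in> borel_measurable borel" unfolding K_def by measurable
qed (rule K_bound)

lemma Iv_bound: "\<bar>Iv s t v\<bar> \<le> 2"
  unfolding Iv_def by auto

lemma okf_Iv: "okf (Iv s t)"
  unfolding okf_def
proof (intro conjI exI allI)
  show "Iv s t \<in> borel_measurable borel" unfolding Iv_def by measurable
qed (rule Iv_bound)

lemma meas_le: "(\<lambda>v::real. if v \<le> c then 1 else (0::real)) \<in> borel_measurable borel"
  by measurable
lemma meas_mle: "(\<lambda>v::real. if - v \<le> c then 1 else (0::real)) \<in> borel_measurable borel"
  by measurable

lemma okf_le: "okf (\<lambda>v. if v \<le> c then 1 else 0)"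
  unfolding okf_def using meas_le by (intro conjI exI[of _ 1]) auto

lemma okf_mle: "okf (\<lambda>v. if - v \<le> c then 1 else 0)"
  unfolding okf_def using meas_mle by (intro conjI exI[of _ 1]) auto

lemma okf_1: "okf (\<lambda>v. 1)"
  unfolding okf_def by auto

lemma K_split: "s \<le> u \<Longrightarrow> u \<le> t \<Longrightarrow> K s t v = K s u v + K u t v"
  unfolding K_def by (simp add: min_def max_def)

lemma Iv_split: "s \<le> u \<Longrightarrow> u \<le> t \<Longrightarrow> Iv s t v = Iv s u v + Iv u t v"
  unfolding Iv_def by auto

lemma K_lower: "0 \<le> s \<Longrightarrow> s \<le> t \<Longrightarrow>
   (t - s) * ((if - v \<le> t then 1 else 0) - (if v \<le> t then 1 else 0)) - (t - s) * Iv s t v \<le> K s t v"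
  unfolding K_def Iv_def
  by (cases "v \<le> - t"; cases "v < - s"; cases "v \<le> s"; cases "v \<le> t") (simp_all add: min_def max_def)

lemma K_clamp: "0 \<le> n \<Longrightarrow> K 0 n v = max (- n) (min v n)"
  unfolding K_def by (auto simp: min_def max_def)


locale dens =
  fixes a :: "real \<Rightarrow> real" and E :: real
  assumes nonneg: "\<And>v. 0 \<le> a v" and tot: "(a has_integral 1) UNIV"
    and mean: "((\<lambda>v. v * a v) has_integral E) UNIV"
begin

lemma a_int: "a integrable_on UNIV" using tot by blast

lemma a_abs: "a absolutely_integrable_on UNIV"
  by (rule nonnegative_absolutely_integrable_1[OF a_int nonneg])

lemma okf_abs: "okf \<phi> \<Longrightarrow> (\<lambda>v. \<phi> v * a v) absolutely_integrable_on UNIV"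
  unfolding okf_def
  apply (elim conjE exE)
  apply (rule absolutely_integrable_bounded_measurable_product_real)
     apply (erule bm_leb)
    apply simp
   apply (auto simp: bounded_iff intro: a_abs)
  done

lemma okf_int: "okf \<phi> \<Longrightarrow> (\<lambda>v. \<phi> v * a v) integrable_on UNIV"
  using okf_abs absolutely_integrable_on_def by blast

definition J :: "(real \<Rightarrow> real) \<Rightarrow> real" where
  "J \<phi> = integral UNIV (\<lambda>v. \<phi> v * a v)"

lemma J_add: "okf \<phi> \<Longrightarrow> okf \<psi> \<Longrightarrow> J (\<lambda>v. \<phi> v + \<psi> v) = J \<phi> + J \<psi>"
  unfolding J_def by (simp add: distrib_right integral_add okf_int)

lemma J_diff: "okf \<phi> \<Longrightarrow> okf \<psi> \<Longrightarrow> J (\<lambda>v. \<phi> v - \<psi> v) = J \<phi> - J \<psi>"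
  unfolding J_def by (simp add: left_diff_distrib integral_diff okf_int)

lemma J_cmult: "J (\<lambda>v. c * \<phi> v) = c * J \<phi>"
  unfolding J_def by (simp add: mult.assoc)

lemma J_mono: "okf \<phi> \<Longrightarrow> okf \<psi> \<Longrightarrow> (\<And>v. \<phi> v \<le> \<psi> v) \<Longrightarrow> J \<phi> \<le> J \<psi>"
  unfolding J_def by (rule integral_le) (auto intro: okf_int mult_right_mono nonneg)

lemma J_one: "J (\<lambda>v. 1) = 1"
  unfolding J_def using tot by (simp add: integral_unique)

definition Fa :: "real \<Rightarrow> real" where "Fa c = J (\<lambda>v. if v \<le> c then 1 else 0)"
definition Fb :: "real \<Rightarrow> real" where "Fb c = J (\<lambda>v. if - v \<le> c then 1 else 0)"
definition om :: "real \<Rightarrow> real \<Rightarrow> real" where "om s t = J (Iv s t)"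

lemma base: assumes st: "0 \<le> s" "s \<le> t"
  shows "(t - s) * (Fb t - Fa t) - (t - s) * om s t \<le> J (K s t)"
proof -
  let ?L = "\<lambda>v. (t - s) * ((if - v \<le> t then 1 else 0) - (if v \<le> t then 1 else 0)) - (t - s) * Iv s t v"
  have ok1: "okf (\<lambda>v. (t - s) * ((if - v \<le> t then 1 else 0) - (if v \<le> t then 1 else 0)))"
    by (intro okf_cmult okf_diff okf_mle okf_le)
  have ok2: "okf (\<lambda>v. (t - s) * Iv s t v)" by (intro okf_cmult okf_Iv)
  have "J ?L \<le> J (K s t)"
    by (rule J_mono) (use ok1 ok2 okf_diff okf_K st K_lower in auto)
  moreover have "J ?L = (t - s) * (Fb t - Fa t) - (t - s) * om s t"
    using ok1 ok2 by (simp add: J_diff J_cmult okf_mle okf_le Fa_def Fb_def om_def)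
  ultimately show ?thesis by simp
qed

end

context dens begin

lemma base0: assumes Dpos: "\<And>c. 0 < c \<Longrightarrow> Fa c \<le> Fb c" and st: "0 \<le> s" "s \<le> t"
  shows "- (t - s) * om s t \<le> J (K s t)"
proof -
  have "0 \<le> (t - s) * (Fb t - Fa t)"
  proof (cases "s = t")
    case True then show ?thesis by simp
  next
    case False then have "0 < t" using st by linarith
    then show ?thesis using Dpos[of t] st by simp
  qed
  moreover have "- (t - s) * om s t = - ((t - s) * om s t)" by (simp add: algebra_simps)
  ultimately show ?thesis using base[OF st] by linarith
qed

lemma K_ind: assumes Dpos: "\<And>c. 0 < c \<Longrightarrow> Fa c \<le> Fb c"
  shows "\<forall>s t. 0 \<le> s \<longrightarrow> s \<le> t \<longrightarrow> - ((t - s) / real (Suc n)) * om s t \<le> J (K s t)"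
proof (induction n)
  case 0
  show ?case using base0[OF Dpos] by simp
next
  case (Suc n)
  show ?case
  proof (intro allI impI)
    fix s t :: real assume st: "0 \<le> s" "s \<le> t"
    define d where "d = (t - s) / real (Suc (Suc n))"
    define u where "u = s + d"
    have d0: "0 \<le> d" using st by (simp add: d_def)
    have e: "t - u = real (Suc n) * d" unfolding u_def d_def by (simp add: field_simps)
    have d1: "(t - u) / real (Suc n) = d" by (simp add: e)
    have su: "s \<le> u" "u \<le> t"
    proof -
      show "s \<le> u" using d0 by (simp add: u_def)
      have "(t - u) / real (Suc n) \<ge> 0" using d1 d0 by simp
      then show "u \<le> t" by (simp add: divide_nonneg_pos zero_le_divide_iff)
    qed
    have eq1: "J (K s t) = J (K s u) + J (K u t)"
    proof -
      have "K s t = (\<lambda>v. K s u v + K u t v)" by (rule ext) (rule K_split[OF su])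
      then have "J (K s t) = J (\<lambda>v. K s u v + K u t v)" by simp
      also have "\<dots> = J (K s u) + J (K u t)" using su by (intro J_add okf_K)
      finally show ?thesis .
    qed
    have eq2: "om s t = om s u + om u t"
    proof -
      have "Iv s t = (\<lambda>v. Iv s u v + Iv u t v)" by (rule ext) (rule Iv_split[OF su])
      then have "om s t = J (\<lambda>v. Iv s u v + Iv u t v)" unfolding om_def by simp
      also have "\<dots> = om s u + om u t" unfolding om_def by (intro J_add okf_Iv)
      finally show ?thesis .
    qed
    have h1: "- (u - s) * om s u \<le> J (K s u)" using base0[OF Dpos st(1) su(1)] .
    have h2: "- ((t - u) / real (Suc n)) * om u t \<le> J (K u t)"
      using Suc.IH st su by auto
    have "u - s = d" by (simp add: u_def)
    then have h1': "- d * om s u \<le> J (K s u)" using h1 by simp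
    have h2': "- d * om u t \<le> J (K u t)" using h2 unfolding d1 by simp
    have "- d * om s t = - d * om s u + - d * om u t" using eq2 by (simp add: algebra_simps)
    then have "- d * om s t \<le> J (K s t)" using h1' h2' eq1 by linarith
    then show "- ((t - s) / real (Suc (Suc n))) * om s t \<le> J (K s t)" by (simp add: d_def)
  qed
qed

lemma K_nonneg: assumes Dpos: "\<And>c. 0 < c \<Longrightarrow> Fa c \<le> Fb c" and st: "0 \<le> s" "s \<le> t"
  shows "0 \<le> J (K s t)"
proof (rule ccontr)
  assume "\<not> ?thesis"
  then have neg: "J (K s t) < 0" by simp
  define X where "X = (t - s) * om s t"
  obtain n where n: "X / (- J (K s t)) < real n" using reals_Archimedean2 by blast
  have "- ((t - s) / real (Suc n)) * om s t \<le> J (K s t)" using K_ind[OF Dpos] st by blast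
  then have "- (X / real (Suc n)) \<le> J (K s t)" by (simp add: X_def)
  then have A: "- X \<le> J (K s t) * real (Suc n)" by (simp add: field_simps)
  have nJ: "0 < - J (K s t)" using neg by simp
  have B: "X < real n * (- J (K s t))" using n pos_divide_less_eq[OF nJ] by blast
  from A B neg show False by (simp add: algebra_simps)
qed

end

context dens begin

lemma mean_abs: "(\<lambda>v. v * a v) absolutely_integrable_on UNIV"
proof -
  let ?f = "\<lambda>v. v * a v"
  have fint: "?f integrable_on UNIV" using mean by blast
  define fk where "fk k v = (if v \<in> {0..real k} then ?f v else 0)" for k v
  define fp where "fp v = (if 0 \<le> v then ?f v else 0)" for v
  have fnn: "0 \<le> ?f v" if "0 \<le> v" for v using that nonneg[of v] by simp
  have fint_i: "?f integrable_on {c..d}" for c d by (rule integrable_on_subinterval[OF fint]) auto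
  have i1: "fk k integrable_on UNIV" for k
    unfolding fk_def by (rule integrable_restrict_UNIV[THEN iffD2, OF fint_i])
  have i2: "fk k v \<le> fk (Suc k) v" for k v
    unfolding fk_def using fnn[of v] by auto
  have i3: "(\<lambda>k. fk k v) \<longlonglongrightarrow> fp v" for v
  proof -
    obtain N where N: "v \<le> real N" using real_arch_simple by blast
    have "eventually (\<lambda>k. fk k v = fp v) sequentially"
      unfolding eventually_sequentially
    proof (intro exI[of _ N] allI impI)
      fix k assume "N \<le> k"
      then have "v \<le> real k" using N by (meson of_nat_le_iff order_trans)
      then show "fk k v = fp v" by (auto simp: fk_def fp_def)
    qed
    then show ?thesis by (rule tendsto_eventually)
  qed
  have i4: "bounded (range (\<lambda>k. integral UNIV (fk k)))"
  proof -
    from mean have "\<forall>e>0. \<exists>B>0. \<forall>c d. ball 0 B \<subseteq> cbox c d \<longrightarrow>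
            norm (integral (cbox c d) (\<lambda>x. if x \<in> UNIV then ?f x else 0) - E) < e"
      using has_integral_alt'[of ?f E UNIV] by blast
    then have "\<exists>B>0. \<forall>c d. ball 0 B \<subseteq> cbox c d \<longrightarrow>
            norm (integral (cbox c d) (\<lambda>x. if x \<in> UNIV then ?f x else 0) - E) < 1"
      by (rule allE[of _ 1]) simp
    then obtain B where B: "B > 0" and
      Bp0: "\<forall>c d. ball 0 B \<subseteq> cbox c d \<longrightarrow>
            norm (integral (cbox c d) (\<lambda>x. if x \<in> UNIV then ?f x else 0) - E) < 1"
      by blast
    have Bp: "\<And>c d. ball 0 B \<subseteq> cbox c d \<Longrightarrow> norm (integral (cbox c d) ?f - E) < 1"
      using Bp0 by simp
    define C where "C = E + 1 - integral {-B..0} ?f"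
    have "\<bar>integral UNIV (fk k)\<bar> \<le> C" for k
    proof -
      define M where "M = max (real k) B"
      have eq: "integral UNIV (fk k) = integral {0..real k} ?f"
        unfolding fk_def by (rule integral_restrict_UNIV)
      have nn: "0 \<le> integral {0..real k} ?f"
        by (rule integral_nonneg) (auto intro: fint_i fnn)
      have le1: "integral {0..real k} ?f \<le> integral {0..M} ?f"
        by (rule integral_subset_le) (auto simp: M_def intro: fint_i fnn)
      have comb: "integral {-B..0} ?f + integral {0..M} ?f = integral {-B..M} ?f"
        by (rule Henstock_Kurzweil_Integration.integral_combine) (use B in \<open>auto simp: M_def intro: fint_i\<close>)
      have "ball 0 B \<subseteq> cbox (-B) M"
      proof
        fix x :: real assume "x \<in> ball 0 B"
        then have "\<bar>x\<bar> < B" by (simp add: dist_real_def)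
        moreover have "B \<le> M" by (simp add: M_def)
        ultimately show "x \<in> cbox (-B) M" unfolding cbox_interval by (simp add: abs_less_iff)
      qed
      then have "norm (integral (cbox (-B) M) ?f - E) < 1" by (rule Bp)
      then have "integral {-B..M} ?f < E + 1" by (simp add: cbox_interval)
      then show ?thesis using eq nn le1 comb by (simp add: C_def)
    qed
    then show ?thesis by (auto simp: bounded_iff)
  qed
  have "fp integrable_on UNIV"
    using monotone_convergence_increasing[of fk UNIV fp] i1 i2 i3 i4 by blast
  then have fpa: "fp absolutely_integrable_on UNIV"
    by (rule nonnegative_absolutely_integrable_1) (auto simp: fp_def fnn)
  have "?f v \<le> fp v" for v
  proof (cases "0 \<le> v")
    case False then show ?thesis using nonneg[of v] by (simp add: fp_def mult_nonpos_nonneg)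
  qed (simp add: fp_def)
  then show ?thesis
    by (intro absolutely_integrable_absolutely_integrable_ubound[OF fint fpa]) auto
qed

lemma mean_lim: "(\<lambda>n. J (K 0 (real n))) \<longlonglongrightarrow> E"
proof -
  have E_eq: "integral UNIV (\<lambda>v. v * a v) = E" using mean by (rule integral_unique)
  have "(\<lambda>v. norm (v * a v)) integrable_on UNIV"
    using mean_abs by (simp add: absolutely_integrable_on_def)
  moreover have "(\<lambda>v. norm (v * a v)) = (\<lambda>v. \<bar>v\<bar> * a v)"
    using nonneg by (auto simp: abs_mult)
  ultimately have habs: "(\<lambda>v. \<bar>v\<bar> * a v) integrable_on UNIV" by simp
  have "(\<lambda>n. integral UNIV (\<lambda>v. K 0 (real n) v * a v)) \<longlonglongrightarrow> integral UNIV (\<lambda>v. v * a v)"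
  proof (rule dominated_convergence(2)[where h = "\<lambda>v. \<bar>v\<bar> * a v"])
    show "(\<lambda>v. K 0 (real k) v * a v) integrable_on UNIV" for k
      by (intro okf_int okf_K) simp
    show "(\<lambda>v. \<bar>v\<bar> * a v) integrable_on UNIV" by (rule habs)
    show "norm (K 0 (real k) v * a v) \<le> \<bar>v\<bar> * a v" for k v
    proof -
      have "\<bar>K 0 (real k) v\<bar> \<le> \<bar>v\<bar>" by (simp add: K_clamp)
      then show ?thesis using nonneg[of v] by (simp add: abs_mult mult_right_mono)
    qed
    show "(\<lambda>k. K 0 (real k) v * a v) \<longlonglongrightarrow> v * a v" for v
    proof -
      obtain N where N: "\<bar>v\<bar> \<le> real N" using real_arch_simple by blast
      have "eventually (\<lambda>k. K 0 (real k) v * a v = v * a v) sequentially"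
        unfolding eventually_sequentially
      proof (intro exI[of _ N] allI impI)
        fix k assume "N \<le> k"
        then have "\<bar>v\<bar> \<le> real k" using N by (meson of_nat_le_iff order_trans)
        then show "K 0 (real k) v * a v = v * a v" by (simp add: K_clamp)
      qed
      then show ?thesis by (rule tendsto_eventually)
    qed
  qed
  then show ?thesis unfolding J_def E_eq .
qed

lemma om_small: assumes w: "0 < w" and dl: "0 < dl"
  shows "\<exists>s. 0 \<le> s \<and> s < w \<and> om s w < dl"
proof -
  define sq where "sq k = w - (w / 2) * inverse (real (Suc k))" for k
  have inv: "0 < inverse (real (Suc k))" "inverse (real (Suc k)) \<le> 1" for k
    by (auto simp: field_simps)
  have sq_lt: "sq k < w" for k using inv[of k] w by (simp add: sq_def)
  have sq_ge: "w / 2 \<le> sq k" for k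
  proof -
    have "(w / 2) * inverse (real (Suc k)) \<le> (w / 2) * 1"
      using inv[of k] w by (intro mult_left_mono) auto
    then show ?thesis by (simp add: sq_def)
  qed
  have sq_lim: "sq \<longlonglongrightarrow> w"
  proof -
    have "(\<lambda>k. w - (w / 2) * inverse (real (Suc k))) \<longlonglongrightarrow> w - (w / 2) * 0"
      by (intro tendsto_intros LIMSEQ_inverse_real_of_nat)
    then show ?thesis by (simp add: sq_def[abs_def])
  qed
  define g where "g v = ((if v = w then 1 else 0) + (if - v = w then 1 else 0)) * a v" for v
  have lim: "(\<lambda>k. integral UNIV (\<lambda>v. Iv (sq k) w v * a v)) \<longlonglongrightarrow> integral UNIV g"
  proof (rule dominated_convergence(2)[where h = "\<lambda>v. 2 * a v"])
    show "(\<lambda>v. Iv (sq k) w v * a v) integrable_on UNIV" for k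
      by (intro okf_int okf_Iv)
    show "(\<lambda>v. 2 * a v) integrable_on UNIV" using a_int by simp
    show "norm (Iv (sq k) w v * a v) \<le> 2 * a v" for k v
      using Iv_bound[of "sq k" w v] nonneg[of v] by (simp add: abs_mult mult_right_mono)
    show "(\<lambda>k. Iv (sq k) w v * a v) \<longlonglongrightarrow> g v" for v
    proof -
      have ev1: "eventually (\<lambda>k. v < w \<longrightarrow> v < sq k) sequentially"
      proof (cases "v < w")
        case True
        then show ?thesis using order_tendstoD(1)[OF sq_lim True] by (auto elim: eventually_mono)
      qed simp
      have ev2: "eventually (\<lambda>k. - v < w \<longrightarrow> - v < sq k) sequentially"
      proof (cases "- v < w")
        case True
        then show ?thesis using order_tendstoD(1)[OF sq_lim True] by (auto elim: eventually_mono)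
      qed simp
      have "eventually (\<lambda>k. Iv (sq k) w v * a v = g v) sequentially"
        using eventually_conj[OF ev1 ev2]
      proof (rule eventually_mono)
        fix k assume H: "(v < w \<longrightarrow> v < sq k) \<and> (- v < w \<longrightarrow> - v < sq k)"
        have "0 < sq k" using sq_ge[of k] w by linarith
        then have "Iv (sq k) w v = (if v = w then 1 else 0) + (if - v = w then 1 else 0)"
          using H sq_lt[of k] w unfolding Iv_def by auto
        then show "Iv (sq k) w v * a v = g v" by (simp add: g_def)
      qed
      then show ?thesis by (rule tendsto_eventually)
    qed
  qed
  have g0: "integral UNIV g = 0"
  proof -
    have ng: "negligible {w, - w}" by (rule negligible_finite) simp
    have sp: "\<And>x. x \<in> UNIV - {w, - w} \<Longrightarrow> g x = 0" by (auto simp: g_def)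
    have "(g has_integral 0) UNIV"
      by (rule has_integral_spike[of "{w, - w}" UNIV g "\<lambda>x. 0" 0]) (use ng sp in auto)
    then show ?thesis by (rule integral_unique)
  qed
  have "(\<lambda>k. om (sq k) w) \<longlonglongrightarrow> 0" using lim g0 by (simp add: om_def J_def)
  then have "eventually (\<lambda>k. om (sq k) w < dl) sequentially" using order_tendstoD(2) dl by blast
  then obtain k where "om (sq k) w < dl" by (auto simp: eventually_sequentially)
  moreover have "0 \<le> sq k" using sq_ge[of k] w by linarith
  ultimately show ?thesis using sq_lt[of k] by blast
qed

theorem E_nonneg: assumes Dpos: "\<And>c. 0 < c \<Longrightarrow> Fa c \<le> Fb c" shows "0 \<le> E"
  using mean_lim by (rule LIMSEQ_le_const) (use K_nonneg[OF Dpos] in auto)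

theorem E_pos: assumes Dpos: "\<And>c. 0 < c \<Longrightarrow> Fa c \<le> Fb c" and w: "0 < w" "Fa w < Fb w"
  shows "0 < E"
proof -
  define dl where "dl = Fb w - Fa w"
  have dl0: "0 < dl" using w by (simp add: dl_def)
  obtain s where s: "0 \<le> s" "s < w" "om s w < dl" using om_small[OF w(1) dl0] by blast
  define ga where "ga = (w - s) * (dl - om s w)"
  have ga0: "0 < ga" using s by (simp add: ga_def)
  have gale: "ga \<le> J (K s w)" using base[of s w] s by (simp add: ga_def dl_def algebra_simps)
  obtain N where N: "w \<le> real N" using real_arch_simple by blast
  have "ga \<le> J (K 0 (real n))" if "N \<le> n" for n
  proof -
    have wn: "w \<le> real n" using N that by (meson of_nat_le_iff order_trans)
    have "K 0 (real n) = (\<lambda>v. K 0 s v + (K s w v + K w (real n) v))"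
    proof
      fix v
      show "K 0 (real n) v = K 0 s v + (K s w v + K w (real n) v)"
        using K_split[of 0 s "real n" v] K_split[of s w "real n" v] s wn by simp
    qed
    then have "J (K 0 (real n)) = J (K 0 s) + (J (K s w) + J (K w (real n)))"
      using s wn by (simp add: J_add okf_K okf_add)
    moreover have "0 \<le> J (K 0 s)" using K_nonneg[OF Dpos, of 0 s] s by simp
    moreover have "0 \<le> J (K w (real n))" using K_nonneg[OF Dpos, of w "real n"] w wn by simp
    ultimately show ?thesis using gale by linarith
  qed
  then have "ga \<le> E" using mean_lim by (intro LIMSEQ_le_const[of _ E ga]) auto
  with ga0 show ?thesis by simp
qed

end

lemma refl_UNIV: fixes \<phi> :: "real \<Rightarrow> real"
  assumes "\<phi> absolutely_integrable_on UNIV"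
  shows "integral UNIV (\<lambda>x. \<phi> (- x)) = integral UNIV \<phi>"
  using has_absolute_integral_reflect_real[of UNIV UNIV \<phi> "integral UNIV \<phi>"] assms by auto

context dens begin

lemma Fa_eq: "integral {..c} a = Fa c"
proof -
  have "integral {..c} a = integral UNIV (\<lambda>v. if v \<in> {..c} then a v else 0)"
    by (rule integral_restrict_UNIV[symmetric])
  also have "(\<lambda>v. if v \<in> {..c} then a v else 0) = (\<lambda>v. (if v \<le> c then 1 else 0) * a v)"
    by (rule ext) simp
  finally show ?thesis by (simp add: Fa_def J_def)
qed

lemma Fb_eq: "integral {..c} (\<lambda>v. a (- v)) = Fb c"
proof -
  let ?\<phi> = "\<lambda>w. (if - w \<le> c then 1 else 0) * a w"
  have "integral {..c} (\<lambda>v. a (- v)) = integral UNIV (\<lambda>v. if v \<in> {..c} then a (- v) else 0)"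
    by (rule integral_restrict_UNIV[symmetric])
  also have "(\<lambda>v. if v \<in> {..c} then a (- v) else 0) = (\<lambda>v. ?\<phi> (- v))"
    by (rule ext) simp
  also have "integral UNIV (\<lambda>v. ?\<phi> (- v)) = integral UNIV ?\<phi>"
    by (rule refl_UNIV) (intro okf_abs okf_mle)
  finally show ?thesis by (simp add: Fb_def J_def)
qed

lemma Fa_le1: "Fa c \<le> 1"
  unfolding Fa_def using J_mono[OF okf_le okf_1, of c] J_one by simp

lemma Fb_mono: "z \<le> c \<Longrightarrow> Fb z \<le> Fb c"
  unfolding Fb_def by (rule J_mono[OF okf_mle okf_mle]) auto

end

lemma chr_near0: assumes "chronometric r" shows "\<exists>b>0. \<forall>y. 0 < y \<and> y < b \<longrightarrow> t < r y"
proof -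
  have "filterlim r at_top (at_right 0)" using assms unfolding chronometric_def by blast
  then have "eventually (\<lambda>y. t + 1 \<le> r y) (at_right 0)" unfolding filterlim_at_top by blast
  then obtain b where "b > 0" "\<forall>y>0. y < b \<longrightarrow> t + 1 \<le> r y"
    unfolding eventually_at_right_field by auto
  then show ?thesis by (intro exI[of _ b]) auto
qed

lemma chr_far: assumes "chronometric r" "0 < t" shows "\<exists>N. \<forall>v\<ge>N. r v < t"
proof -
  have "(r \<longlongrightarrow> 0) at_top" using assms unfolding chronometric_def by blast
  then have "eventually (\<lambda>v. r v < t) at_top" using assms(2) by (rule order_tendstoD(2))
  then show ?thesis unfolding eventually_at_top_linorder .
qed

lemma chr_uniq: assumes "chronometric r" "0 < z1" "0 < z2" "0 < r z1" "r z1 = r z2"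
  shows "z1 = z2"
proof -
  have sd: "\<And>v w. 0 < v \<Longrightarrow> v < w \<Longrightarrow> 0 < r v \<Longrightarrow> 0 < r w \<Longrightarrow> r w < r v"
    using assms(1) unfolding chronometric_def by blast
  show ?thesis
  proof (rule ccontr)
    assume "z1 \<noteq> z2"
    then consider "z1 < z2" | "z2 < z1" by linarith
    then show False
    proof cases
      case 1 then show False using sd[of z1 z2] assms by auto
    next
      case 2 then show False using sd[of z2 z1] assms by auto
    qed
  qed
qed

lemma chr_exists: assumes "chronometric r" "0 < t" shows "\<exists>z>0. r z = t"
proof -
  have cont: "continuous_on {0<..} r" using assms(1) unfolding chronometric_def by blast
  obtain b where b: "b > 0" "\<forall>y. 0 < y \<and> y < b \<longrightarrow> t < r y" using chr_near0[OF assms(1)] by blast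
  obtain N where N: "\<forall>v\<ge>N. r v < t" using chr_far[OF assms] by blast
  define v1 where "v1 = b / 2"
  define v2 where "v2 = max N (v1 + 1)"
  have v1: "0 < v1" "t < r v1" using b by (auto simp: v1_def)
  have v2: "v1 \<le> v2" "r v2 < t" using N by (auto simp: v2_def)
  have "continuous_on {v1..v2} r" by (rule continuous_on_subset[OF cont]) (use v1 in auto)
  then obtain z where "v1 \<le> z" "z \<le> v2" "r z = t"
    using IVT2'[of r v2 t v1] v1 v2 by auto
  then show ?thesis using v1 by (intro exI[of _ z]) auto
qed

lemma r_inv_prop: assumes "chronometric r" "0 < t"
  shows "0 < r_inv r t \<and> r (r_inv r t) = t"
proof -
  obtain z where z: "0 < z" "r z = t" using chr_exists[OF assms] by blast
  have "r_inv r t = z" unfolding r_inv_def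
  proof (rule the_equality)
    show "0 < z \<and> 0 < r z \<and> r z = t" using z assms by simp
    fix z' assume "0 < z' \<and> 0 < r z' \<and> r z' = t"
    then show "z' = z" using chr_uniq[OF assms(1), of z' z] z by auto
  qed
  then show ?thesis using z by simp
qed

lemma r_inv_eq: assumes "chronometric r" "0 < w" "0 < r w" shows "r_inv r (r w) = w"
  unfolding r_inv_def
proof (rule the_equality)
  show "0 < w \<and> 0 < r w \<and> r w = r w" using assms by simp
  fix z' assume "0 < z' \<and> 0 < r z' \<and> r z' = r w"
  then show "z' = w" using chr_uniq[OF assms(1), of z' w] assms by auto
qed

lemma r_inv_less: assumes "chronometric r" "0 < w" "r w = 0" "0 < t" shows "r_inv r t < w"
proof (rule ccontr)
  assume "\<not> r_inv r t < w"
  define z where "z = r_inv r t"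
  have z: "0 < z" "r z = t" using r_inv_prop[OF assms(1,4)] by (auto simp: z_def)
  have "z \<noteq> w" using z assms by auto
  with \<open>\<not> r_inv r t < w\<close> have wz: "w < z" by (simp add: z_def)
  have cont: "continuous_on {0<..} r" using assms(1) unfolding chronometric_def by blast
  have sd: "\<And>v w. 0 < v \<Longrightarrow> v < w \<Longrightarrow> 0 < r v \<Longrightarrow> 0 < r w \<Longrightarrow> r w < r v"
    using assms(1) unfolding chronometric_def by blast
  obtain b where b: "b > 0" "\<forall>y. 0 < y \<and> y < b \<longrightarrow> t < r y" using chr_near0[OF assms(1)] by blast
  define v where "v = min (b / 2) (w / 2)"
  have v: "0 < v" "v \<le> w" "t < r v" using b assms(2) by (auto simp: v_def)
  have "continuous_on {v..w} r" by (rule continuous_on_subset[OF cont]) (use v in auto)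
  then obtain v' where v': "v \<le> v'" "v' \<le> w" "r v' = t"
    using IVT2'[of r w t v] v assms by auto
  have "r z < r v'" using sd[of v' z] v v' wz z assms(4) by auto
  then show False using v' z by simp
qed

lemma cdfRplus_small: assumes "pos_density_Rplus h" "0 < e" shows "\<exists>t>0. cdf_Rplus h t < e"
proof -
  have "(h has_integral 1) {0..}" using assms(1) unfolding pos_density_Rplus_def by blast
  then have "h integrable_on {0..}" by (rule has_integral_integrable)
  then have "h integrable_on {0..1}" by (rule integrable_on_subinterval) auto
  then have cont: "continuous_on {0..1} (\<lambda>x. integral {0..x} h)" by (rule indefinite_integral_continuous_1)
  have "(0::real) \<in> {0..1}" by simp
  with cont obtain d where d: "d > 0"
    "\<forall>x'\<in>{0..1}. dist x' 0 < d \<longrightarrow> dist (integral {0..x'} h) (integral {0..0} h) < e"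
    using assms(2) unfolding continuous_on_iff by blast
  define t where "t = min (d / 2) 1"
  have t: "0 < t" "t \<in> {0..1}" "dist t 0 < d" using d by (auto simp: t_def dist_real_def)
  then have "dist (integral {0..t} h) (integral {0..0} h) < e" using d by blast
  then have "integral {0..t} h < e" by (simp add: dist_real_def)
  then show ?thesis using t by (auto simp: cdf_Rplus_def)
qed

lemma cdfRplus_0: "cdf_Rplus h 0 = 0"
  by (simp add: cdf_Rplus_def)

theorem theorem1:
  fixes D :: "('a::finite \<times> 'a) set"
    and p :: "'a \<Rightarrow> 'a \<Rightarrow> real"
    and f :: "'a \<Rightarrow> 'a \<Rightarrow> real \<Rightarrow> real"
    and x y :: 'a and q :: real
  assumes "domain_ok D"
    and "SCF_RT D p f"
    and "\<exists>u g r. rationalizes u g r D p f"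
    and "(x, y) \<in> D"
    and "q = p x y / p y x"
  shows "(qFSD q (cdf_Rplus (f y x)) (cdf_Rplus (f x y)) \<longrightarrow>
            (\<forall>u g r. rationalizes u g r D p f \<longrightarrow> u x \<ge> u y))
       \<and> (qSFSD q (cdf_Rplus (f y x)) (cdf_Rplus (f x y)) \<longrightarrow>
            (\<forall>u g r. rationalizes u g r D p f \<longrightarrow> u x > u y))"
proof -
  have xy: "x \<noteq> y" and yx: "(y, x) \<in> D"
    using assms(1,4) unfolding domain_ok_def by auto
  have scf: "0 < p x y" "0 < p y x" "p x y + p y x = 1"
    using assms(2,4) yx unfolding SCF_RT_def SCF_def by auto
  have fd: "pos_density_Rplus (f x y)" "pos_density_Rplus (f y x)"
    using assms(2,4) yx unfolding SCF_RT_def by auto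
  have pq: "p y x * q = p x y" using scf assms(5) by simp
  have key: "(qFSD q (cdf_Rplus (f y x)) (cdf_Rplus (f x y)) \<longrightarrow> u y \<le> u x)
     \<and> (qSFSD q (cdf_Rplus (f y x)) (cdf_Rplus (f x y)) \<longrightarrow> u y < u x)"
    if rat: "rationalizes u g r D p f" for u g r
  proof -
    have rum: "RUM u g" and chr: "chronometric r"
      using rat unfolding rationalizes_def RUM_CF_def by auto
    have c1: "cdf_R (g x y) 0 = p y x"
      and c2: "\<And>t. 0 < t \<Longrightarrow> (1 - cdf_R (g x y) (r_inv r t)) / (1 - cdf_R (g x y) 0) = cdf_Rplus (f x y) t"
      and c3: "cdf_R (g y x) 0 = p x y"
      and c4: "\<And>t. 0 < t \<Longrightarrow> (1 - cdf_R (g y x) (r_inv r t)) / (1 - cdf_R (g y x) 0) = cdf_Rplus (f y x) t"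
      using rat assms(4) yx unfolding rationalizes_def by auto
    note R1 = rum[unfolded RUM_def, rule_format, OF xy]
    have yx': "y \<noteq> x" using xy by simp
    note R2 = rum[unfolded RUM_def, rule_format, OF yx']
    have dA: "density_R (g x y)" using R1 by (rule conjunct1)
    have mA: "((\<lambda>v. v * g x y v) has_integral (u x - u y)) UNIV" using R1 by (rule conjunct2[THEN conjunct1])
    have sym: "g y x = (\<lambda>v. g x y (- v))"
      using R2[THEN conjunct2, THEN conjunct2, THEN conjunct1] by (simp add: fun_eq_iff)
    interpret dens "g x y" "u x - u y"
      using dA mA unfolding density_R_def by unfold_locales auto
    have FaE: "cdf_R (g x y) c = Fa c" for c unfolding cdf_R_def by (rule Fa_eq)
    have FbE: "cdf_R (g y x) c = Fb c" for c unfolding cdf_R_def sym by (rule Fb_eq)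
    have Aw: "Fa (r_inv r t) = 1 - p x y * cdf_Rplus (f x y) t" if "0 < t" for t
    proof -
      have "1 - p y x = p x y" using scf by simp
      then have "(1 - Fa (r_inv r t)) / p x y = cdf_Rplus (f x y) t"
        using c2[OF that] c1 unfolding FaE by simp
      then show ?thesis using scf by (simp add: field_simps)
    qed
    have Bw: "Fb (r_inv r t) = 1 - p y x * cdf_Rplus (f y x) t" if "0 < t" for t
    proof -
      have "1 - p x y = p y x" using scf by simp
      then have "(1 - Fb (r_inv r t)) / p y x = cdf_Rplus (f y x) t"
        using c4[OF that] c3 unfolding FbE by simp
      then show ?thesis using scf by (simp add: field_simps)
    qed
    have fsd: "Fa (r_inv r t) \<le> Fb (r_inv r t)"
      if "0 < t" "cdf_Rplus (f y x) t \<le> q * cdf_Rplus (f x y) t" for t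
    proof -
      have "p y x * cdf_Rplus (f y x) t \<le> p y x * (q * cdf_Rplus (f x y) t)"
        using that(2) scf by (intro mult_left_mono) auto
      also have "\<dots> = p x y * cdf_Rplus (f x y) t" using pq by (simp add: mult.assoc[symmetric])
      finally show ?thesis using Aw[OF that(1)] Bw[OF that(1)] by simp
    qed
    have sfsd: "Fa (r_inv r t) < Fb (r_inv r t)"
      if "0 < t" "cdf_Rplus (f y x) t < q * cdf_Rplus (f x y) t" for t
    proof -
      have "p y x * cdf_Rplus (f y x) t < p y x * (q * cdf_Rplus (f x y) t)"
        using that(2) scf by (intro mult_strict_left_mono) auto
      also have "\<dots> = p x y * cdf_Rplus (f x y) t" using pq by (simp add: mult.assoc[symmetric])
      finally show ?thesis using Aw[OF that(1)] Bw[OF that(1)] by simp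
    qed
    have Dpos: "Fa c \<le> Fb c" if Q: "qFSD q (cdf_Rplus (f y x)) (cdf_Rplus (f x y))" and c: "0 < c" for c
    proof (cases "0 < r c")
      case True
      have "Fa (r_inv r (r c)) \<le> Fb (r_inv r (r c))"
        using fsd[OF True] Q True unfolding qFSD_def by auto
      then show ?thesis using r_inv_eq[OF chr c True] by simp
    next
      case False
      then have rc: "r c = 0" using chr c unfolding chronometric_def by force
      have "1 \<le> Fb c"
      proof (rule ccontr)
        assume "\<not> 1 \<le> Fb c"
        define e where "e = 1 - Fb c"
        have e: "0 < e" using \<open>\<not> 1 \<le> Fb c\<close> by (simp add: e_def)
        obtain t where t: "0 < t" "cdf_Rplus (f y x) t < e" using cdfRplus_small[OF fd(2) e] by blast
        have zc: "r_inv r t < c" using r_inv_less[OF chr c rc t(1)] .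
        have "Fb (r_inv r t) \<le> Fb c" using zc by (intro Fb_mono) simp
        moreover have "p y x * cdf_Rplus (f y x) t < p y x * e"
          using t scf by (intro mult_strict_left_mono) auto
        moreover have "p y x * e \<le> e" using scf e by (simp add: mult_le_cancel_right1)
        ultimately show False using Bw[OF t(1)] by (simp add: e_def)
      qed
      then show ?thesis using Fa_le1[of c] by simp
    qed
    show ?thesis
    proof (intro conjI impI)
      assume Q: "qFSD q (cdf_Rplus (f y x)) (cdf_Rplus (f x y))"
      have "0 \<le> u x - u y" by (rule E_nonneg) (rule Dpos[OF Q])
      then show "u y \<le> u x" by simp
    next
      assume Q: "qSFSD q (cdf_Rplus (f y x)) (cdf_Rplus (f x y))"
      then have Q1: "qFSD q (cdf_Rplus (f y x)) (cdf_Rplus (f x y))" unfolding qSFSD_def by blast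
      obtain t where t: "0 \<le> t" "cdf_Rplus (f y x) t < q * cdf_Rplus (f x y) t"
        using Q unfolding qSFSD_def by blast
      have t0: "0 < t"
      proof (rule ccontr)
        assume "\<not> 0 < t"
        then have "t = 0" using t(1) by simp
        then show False using t(2) by (simp add: cdfRplus_0)
      qed
      have w: "0 < r_inv r t" using r_inv_prop[OF chr t0] by blast
      have "0 < u x - u y" by (rule E_pos[OF Dpos[OF Q1] w sfsd[OF t0 t(2)]])
      then show "u y < u x" by simp
    qed
  qed
  show ?thesis using key by blast
qed

end
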